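(* Consider the TeeRollup protocol described in the context, and let $st_h$ be the latest state recorded by the TeeRollup smart contract (TSC). If a malicious sequencer with a compromised TEE forges an invalid state $st_{h+1}'$ with transaction list $txs_{h+1}'$, i.e. $st_{h+1}'$ is not the state obtained by executing $txs_{h+1}'$ on the initial state $st_h$, then the TSC will not accept $st_{h+1}'$.
   Context: TeeRollup is a rollup protocol on a main chain with finality and smart contracts. There are $n$ sequencers $p_1,\dots,p_n$, each equipped with a TEE enclave $\eta_i$ holding a key pair $(pk_i,sk_i)$ whose public keys are registered on-chain; at most $f$ of these TEEs are compromised (for a compromised TEE the adversary knows $sk_i$ and can sign arbitrary messages), and the remaining TEEs are uncompromised. Malicious sequencers fully control the inputs and outputs of their enclaves (they may choose inputs, delay, drop or replay messages). Rollup states form a chain: a state at height $h$ is $st_h = \langle h, H(st_{h-1}), R_h, H(txs_h)\rangle$, where $H$ is a secure (collision-resistant) hash function, $R_h$ is the Merkle root of the account tree (addresses and balances) and $txs_h$ is the batch of transactions executed to produce $st_h$; the state transition is $st_{h+1} \leftarrow execute(st_h, txs_{h+1})$. An uncompromised enclave, given an input state $s$ and a batch $txs$, runs the fixed protocol program: it outputs the state $execute(s,txs)$, whose previous-hash field is $H(s)$, and signs (with $sk_i$) only states produced this way. A quorum certificate (QC) for a state is a set of valid signatures on its hash from at least $f+1$ distinct registered sequencers. The TSC records the latest accepted state $st_h$ and accepts a submitted state $S$ only if $S$ has height $h+1$, the previous-hash field of $S$ equals $H(st_h)$, and $S$ comes with a valid QC. *)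

theory Defs
  imports Main
begin

(* A rollup state  st_h = <h, H(st_{h-1}), R_h, H(txs_h)>.
   'd = hash digests, 'r = Merkle roots of the account tree. *)
datatype ('d, 'r) rstate =
  State (height: nat) (prev_hash: 'd) (root: 'r) (txs_hash: 'd)

(* A quorum certificate for state S: valid signatures on H(S) from at least
   f+1 distinct registered sequencers (registered = {1..n}).
   sig_ok i d  means: a valid signature under pk_i on message d is available. *)
definition valid_QC ::
  "nat \<Rightarrow> nat \<Rightarrow> (nat \<Rightarrow> 'd \<Rightarrow> bool) \<Rightarrow> (('d,'r) rstate \<Rightarrow> 'd)
    \<Rightarrow> ('d,'r) rstate \<Rightarrow> bool" where
  "valid_QC n f sig_ok Hs S \<longleftrightarrow>
     (\<exists>Q. Q \<subseteq> {1..n} \<and> card Q \<ge> f + 1 \<and> (\<forall>i\<in>Q. sig_ok i (Hs S)))"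

definition tsc_accepts ::
  "nat \<Rightarrow> nat \<Rightarrow> (nat \<Rightarrow> 'd \<Rightarrow> bool) \<Rightarrow> (('d,'r) rstate \<Rightarrow> 'd)
    \<Rightarrow> ('d,'r) rstate \<Rightarrow> ('d,'r) rstate \<Rightarrow> bool" where
  "tsc_accepts n f sig_ok Hs st S \<longleftrightarrow>
     height S = height st + 1 \<and> prev_hash S = Hs st \<and> valid_QC n f sig_ok Hs S"

end

theory Submission
  imports Defs
begin

theorem lemma2:
  fixes n f :: nat
    and Hs :: "('d,'r) rstate \<Rightarrow> 'd"      (* H on states *)
    and Ht :: "'t \<Rightarrow> 'd"                   (* H on transaction batches *)
    and execute :: "('d,'r) rstate \<Rightarrow> 't \<Rightarrow> ('d,'r) rstate"
    and sig_ok :: "nat \<Rightarrow> 'd \<Rightarrow> bool"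
    and C :: "nat set"                          (* compromised TEEs *)
    and st st' :: "('d,'r) rstate" and txs' :: 't
  assumes Hs_cr: "inj Hs" and Ht_cr: "inj Ht"
    and exec_height: "\<And>s txs. height (execute s txs) = height s + 1"
    and exec_prev: "\<And>s txs. prev_hash (execute s txs) = Hs s"
    and exec_txs: "\<And>s txs. txs_hash (execute s txs) = Ht txs"
    and C_sub: "C \<subseteq> {1..n}" and C_card: "card C \<le> f"
    and honest_sign: "\<And>i d. i \<in> {1..n} \<Longrightarrow> i \<notin> C \<Longrightarrow> sig_ok i d \<Longrightarrow>
                         \<exists>s txs. d = Hs (execute s txs)"
    and forged_txs: "txs_hash st' = Ht txs'"
    and invalid: "st' \<noteq> execute st txs'"
  shows "\<not> tsc_accepts n f sig_ok Hs st st'"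
proof
  assume A: "tsc_accepts n f sig_ok Hs st st'"
  then obtain Q where Q: "Q \<subseteq> {1..n}" "card Q \<ge> f + 1" "\<forall>i\<in>Q. sig_ok i (Hs st')"
    and h: "height st' = height st + 1" and p: "prev_hash st' = Hs st"
    unfolding tsc_accepts_def valid_QC_def by blast
  have "\<not> Q \<subseteq> C"
  proof
    assume "Q \<subseteq> C"
    moreover have "finite C" using C_sub finite_subset by blast
    ultimately have "card Q \<le> card C" by (rule card_mono[rotated])
    thus False using Q(2) C_card by simp
  qed
  then obtain i where i: "i \<in> Q" "i \<notin> C" by blast
  then obtain s txs where e: "Hs st' = Hs (execute s txs)"
    using honest_sign Q by blast
  hence st': "st' = execute s txs" using Hs_cr by (simp add: inj_def)
  have "height s = height st" using h st' exec_height by simp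
  have "Hs s = Hs st" using p st' exec_prev by simp
  hence "s = st" using Hs_cr by (simp add: inj_def)
  have "Ht txs = Ht txs'" using forged_txs st' exec_txs by simp
  hence "txs = txs'" using Ht_cr by (simp add: inj_def)
  show False using invalid st' \<open>s = st\<close> \<open>txs = txs'\<close> by simp
qed

end
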